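(* Let $T=(V,E)$ be a temporal bipartite graph with $m=|E|$ edges, let $\tau>0$, $c>0$, let $s$ be a positive integer and let $i\in\{1,\dots,6\}$. Let $\widehat{C}_i$ be the estimator produced by \texttt{TBC-I} with parameters $s$ and $c$, as described in the context. Then $\mathbb{E}[\widehat{C}_i]=C_i$ and $\operatorname{Var}[\widehat{C}_i]\le\frac{m-1}{s}\,C_i^2$.
   Context: A temporal bipartite graph $T=(V,E)$ has node set $V=U\cup L$ with $U\cap L=\emptyset$ and a finite (multi)set $E\subseteq U\times L\times\mathbb{R}^+$ of temporal edges $(u,l,t)$ (several edges may join the same pair $u,l$ at different times); $m=|E|$. A temporal butterfly $B_i$ ($i=1,\dots,6$) is the butterfly on nodes $u'_1,u'_2$ (upper side) and $l'_1,l'_2$ (lower side) with edges $(u'_1,l'_1),(u'_2,l'_1),(u'_1,l'_2),(u'_2,l'_2)$ together with an ordering $\sigma_i$ of these four edges; $\sigma_1,\dots,\sigma_6$ are the six orderings in which $(u'_1,l'_1)$ comes first. Given $\tau>0$, a set $S$ of four temporal edges $\{(u_x,l_x,t_1),(u_y,l_x,t_2),(u_x,l_y,t_3),(u_y,l_y,t_4)\}$ of $T$ with $u_x\ne u_y\in U$, $l_x\ne l_y\in L$ is a $\tau$-instance of $B_i$ if, under the map $u_x\mapsto u'_1,u_y\mapsto u'_2,l_x\mapsto l'_1,l_y\mapsto l'_2$, the order of the four edges by timestamp matches $\sigma_i$ (so $(u_x,l_x,t_1)$ has the smallest timestamp), and $\max_{j\in\{2,3,4\}}t_j-t_1\le\tau$.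 $C_i$ denotes the number of $\tau$-instances of $B_i$ in $T$, and for $e\in E$, $C_i(e)$ denotes the number of $\tau$-instances of $B_i$ whose first (smallest-timestamp) edge is $e$. Algorithm \texttt{TBC-I}: draw $s$ edges $e'_1,\dots,e'_s$ from $E$, each uniformly at random and independently. For each drawn edge $e'=(u,l,t')$, add to the multiset $\widehat{E}$ every edge of $E$ whose timestamp lies in $[t',t'+c\tau]$ (an edge may be added several times). For $e=(u,l,t)\in E$ let $m'_e$ be the number of edges of $E$ with timestamp in $[t-c\tau,t]$. The output is $\widehat{C}_i=\sum_{e\in\widehat{E}}\frac{m}{s\,m'_e}C_i(e)$, the sum counting multiplicities in $\widehat{E}$. *)

theory Defs
  imports "HOL-Probability.Probability"
begin

text \<open>A temporal bipartite graph is given by a finite set E of edge identifiers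
 (so that parallel / repeated edges of the multiset are allowed), together with
 maps eu (upper endpoint, in type 'u), el (lower endpoint, in type 'l, disjoint
 from 'u) and et (timestamp).\<close>

text \<open>The six orderings sigma_1..sigma_6 of the butterfly edges in which edge 0
 = (u1',l1') comes first. Edge labels: 0 = (u1',l1'), 1 = (u2',l1'),
 2 = (u1',l2'), 3 = (u2',l2').\<close>
definition sigma_ord :: "nat \<Rightarrow> nat list" where
  "sigma_ord i = [[0,1,2,3],[0,1,3,2],[0,2,1,3],[0,2,3,1],[0,3,1,2],[0,3,2,1]] ! (i - 1)"

definition matches_order :: "nat \<Rightarrow> (nat \<Rightarrow> real) \<Rightarrow> bool" where
  "matches_order i t \<longleftrightarrow> sorted_wrt (<) (map t (sigma_ord i))"

definition tau_instances ::
  "'e set \<Rightarrow> ('e \<Rightarrow> 'u) \<Rightarrow> ('e \<Rightarrow> 'l) \<Rightarrow> ('e \<Rightarrow> real) \<Rightarrow> real \<Rightarrow> nat \<Rightarrow> 'e set set" where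
  "tau_instances E eu el et tau i =
    {S. \<exists>a b c d. S = {a, b, c, d} \<and> a \<in> E \<and> b \<in> E \<and> c \<in> E \<and> d \<in> E \<and>
        eu a = eu c \<and> eu b = eu d \<and> el a = el b \<and> el c = el d \<and>
        eu a \<noteq> eu b \<and> el a \<noteq> el c \<and>
        matches_order i ((\<lambda>_. 0)(0 := et a, 1 := et b, 2 := et c, 3 := et d)) \<and>
        Max {et b, et c, et d} - et a \<le> tau}"

definition count_C :: "'e set \<Rightarrow> ('e \<Rightarrow> 'u) \<Rightarrow> ('e \<Rightarrow> 'l) \<Rightarrow> ('e \<Rightarrow> real) \<Rightarrow> real \<Rightarrow> nat \<Rightarrow> nat" where
  "count_C E eu el et tau i = card (tau_instances E eu el et tau i)"

definition count_C_edge ::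
  "'e set \<Rightarrow> ('e \<Rightarrow> 'u) \<Rightarrow> ('e \<Rightarrow> 'l) \<Rightarrow> ('e \<Rightarrow> real) \<Rightarrow> real \<Rightarrow> nat \<Rightarrow> 'e \<Rightarrow> nat" where
  "count_C_edge E eu el et tau i e =
     card {S \<in> tau_instances E eu el et tau i. e \<in> S \<and> (\<forall>f\<in>S. f \<noteq> e \<longrightarrow> et e < et f)}"

definition m_prime :: "'e set \<Rightarrow> ('e \<Rightarrow> real) \<Rightarrow> real \<Rightarrow> real \<Rightarrow> 'e \<Rightarrow> nat" where
  "m_prime E et c tau e = card {f \<in> E. et e - c * tau \<le> et f \<and> et f \<le> et e}"

text \<open>The multiset
 hat-E consists, for each draw j, of all edges with timestamp in
 [t(d j), t(d j) + c tau]; multiplicities are handled by summing over draws.\<close>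
definition TBC_I_estimate ::
  "'e set \<Rightarrow> ('e \<Rightarrow> 'u) \<Rightarrow> ('e \<Rightarrow> 'l) \<Rightarrow> ('e \<Rightarrow> real) \<Rightarrow> real \<Rightarrow> real \<Rightarrow> nat \<Rightarrow> nat
     \<Rightarrow> (nat \<Rightarrow> 'e) \<Rightarrow> real" where
  "TBC_I_estimate E eu el et tau c s i d =
     (\<Sum>j<s. \<Sum>e\<in>{e \<in> E. et (d j) \<le> et e \<and> et e \<le> et (d j) + c * tau}.
        real (card E) / (real s * real (m_prime E et c tau e)) * real (count_C_edge E eu el et tau i e))"

definition draws_pmf :: "'e set \<Rightarrow> nat \<Rightarrow> (nat \<Rightarrow> 'e) pmf" where
  "draws_pmf E s = Pi_pmf {..<s} undefined (\<lambda>_. pmf_of_set E)"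

end

theory Submission
  imports Defs
begin

lemma sumsq_le_sq_sum:
  fixes g :: "'a \<Rightarrow> real"
  assumes "finite A" "\<And>x. 0 \<le> g x"
  shows "(\<Sum>x\<in>A. (g x)^2) \<le> (\<Sum>x\<in>A. g x)^2"
  using assms(1)
proof (induction A rule: finite_induct)
  case empty then show ?case by simp
next
  case (insert a F)
  have "0 \<le> g a * sum g F" using assms(2) by (simp add: sum_nonneg)
  then show ?case using insert by (simp add: power2_eq_square algebra_simps)
qed

lemma first_unique:
  assumes "i \<in> {1..6}" "S \<in> tau_instances E eu el et tau i"
  shows "card {e \<in> E. e \<in> S \<and> (\<forall>f\<in>S. f \<noteq> e \<longrightarrow> et e < et f)} = 1"
proof -
  obtain a b c d where S: "S = {a,b,c,d}" "a \<in> E" "b \<in> E" "c \<in> E" "d \<in> E"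
    and mo: "matches_order i ((\<lambda>_. 0)(0 := et a, 1 := et b, 2 := et c, 3 := et d))"
    using assms(2) unfolding tau_instances_def by blast
  have lt: "et a < et b \<and> et a < et c \<and> et a < et d"
  proof -
    have "i = 1 \<or> i = 2 \<or> i = 3 \<or> i = 4 \<or> i = 5 \<or> i = 6" using assms(1) by auto
    then show ?thesis using mo by (elim disjE) (auto simp: matches_order_def sigma_ord_def)
  qed
  have "{e \<in> E. e \<in> S \<and> (\<forall>f\<in>S. f \<noteq> e \<longrightarrow> et e < et f)} = {a}"
    using S lt by auto
  then show ?thesis by simp
qed

lemma sum_count_edges:
  assumes "finite E" "i \<in> {1..6}"
  shows "(\<Sum>e\<in>E. real (count_C_edge E eu el et tau i e)) = real (count_C E eu el et tau i)"
proof -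
  let ?I = "tau_instances E eu el et tau i"
  let ?P = "\<lambda>e S. e \<in> S \<and> (\<forall>f\<in>S. f \<noteq> e \<longrightarrow> et e < et f)"
  have sub: "?I \<subseteq> Pow E" unfolding tau_instances_def by auto
  have fin: "finite ?I" using finite_subset[OF sub] assms(1) by auto
  have "(\<Sum>e\<in>E. real (count_C_edge E eu el et tau i e))
        = (\<Sum>e\<in>E. \<Sum>S\<in>?I. if ?P e S then 1 else 0)"
    unfolding count_C_edge_def using fin
    by (intro sum.cong refl) (simp add: sum.inter_filter[symmetric])
  also have "\<dots> = (\<Sum>S\<in>?I. \<Sum>e\<in>E. if ?P e S then 1 else 0)"
    by (rule sum.swap)
  also have "\<dots> = (\<Sum>S\<in>?I. real (card {e \<in> E. ?P e S}))"
    using assms(1) by (intro sum.cong refl) (simp add: sum.inter_filter[symmetric])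
  also have "\<dots> = (\<Sum>S\<in>?I. 1)"
    using first_unique[OF assms(2)] by (intro sum.cong refl) simp
  finally show ?thesis unfolding count_C_def by simp
qed


lemma sum_Y:
  assumes "finite E" "i \<in> {1..6}" "c > 0" "tau > 0"
  shows "(\<Sum>d\<in>E. \<Sum>e\<in>{e \<in> E. et d \<le> et e \<and> et e \<le> et d + c * tau}.
        real (card E) / (real s * real (m_prime E et c tau e)) * real (count_C_edge E eu el et tau i e))
     = real (card E) / real s * real (count_C E eu el et tau i)"
proof -
  define F where "F e = real (card E) / (real s * real (m_prime E et c tau e)) * real (count_C_edge E eu el et tau i e)" for e
  let ?Q = "\<lambda>d e. et d \<le> et e \<and> et e \<le> et d + c * tau"
  have "(\<Sum>d\<in>E. \<Sum>e\<in>{e \<in> E. ?Q d e}. F e) = (\<Sum>d\<in>E. \<Sum>e\<in>E. if ?Q d e then F e else 0)"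
    by (rule sum.cong[OF refl], rule sum.inter_filter[OF assms(1)])
  also have "\<dots> = (\<Sum>e\<in>E. \<Sum>d\<in>E. if ?Q d e then F e else 0)" by (rule sum.swap)
  also have "\<dots> = (\<Sum>e\<in>E. real (m_prime E et c tau e) * F e)"
  proof (intro sum.cong refl)
    fix e assume "e \<in> E"
    have "(\<Sum>d\<in>E. if ?Q d e then F e else 0) = (\<Sum>d\<in>{d\<in>E. ?Q d e}. F e)"
      using assms(1) by (rule sum.inter_filter[symmetric])
    also have "{d\<in>E. ?Q d e} = {f \<in> E. et e - c * tau \<le> et f \<and> et f \<le> et e}" by auto
    finally show "(\<Sum>d\<in>E. if ?Q d e then F e else 0) = real (m_prime E et c tau e) * F e"
      unfolding m_prime_def by simp
  qed
  also have "\<dots> = (\<Sum>e\<in>E. real (card E) / real s * real (count_C_edge E eu el et tau i e))"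
  proof (intro sum.cong refl)
    fix e assume e: "e \<in> E"
    have "e \<in> {f \<in> E. et e - c * tau \<le> et f \<and> et f \<le> et e}" using e assms by auto
    then have "m_prime E et c tau e \<noteq> 0" unfolding m_prime_def using assms(1)
      by (metis (no_types, lifting) card_0_eq empty_iff finite_subset mem_Collect_eq subsetI)
    then show "real (m_prime E et c tau e) * F e = real (card E) / real s * real (count_C_edge E eu el et tau i e)"
      unfolding F_def by (simp add: field_simps)
  qed
  also have "\<dots> = real (card E) / real s * real (count_C E eu el et tau i)"
    by (subst sum_distrib_left[symmetric]) (simp add: sum_count_edges[OF assms(1,2)])
  finally show ?thesis unfolding F_def .
qed


lemma fin_draws:
  assumes "finite E" "E \<noteq> {}"
  shows "finite (set_pmf (draws_pmf E s))"
  unfolding draws_pmf_def using assms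
  by (subst set_Pi_pmf) (auto simp: o_def)

lemma int_draws:
  assumes "finite E" "E \<noteq> {}"
  shows "integrable (measure_pmf (draws_pmf E s)) (f :: _ \<Rightarrow> real)"
  by (rule integrable_measure_pmf_finite[OF fin_draws[OF assms]])

lemma exp_comp:
  assumes "finite E" "E \<noteq> {}" "j < s"
  shows "measure_pmf.expectation (draws_pmf E s) (\<lambda>h. (g :: _ \<Rightarrow> real) (h j)) = sum g E / real (card E)"
proof -
  have "map_pmf (\<lambda>h. h j) (draws_pmf E s) = pmf_of_set E"
    unfolding draws_pmf_def using assms by (simp add: Pi_pmf_component)
  then have "measure_pmf.expectation (draws_pmf E s) (\<lambda>h. g (h j)) = measure_pmf.expectation (pmf_of_set E) g"
    by (metis integral_map_pmf)
  also have "\<dots> = sum g E / real (card E)" using assms by (simp add: integral_pmf_of_set)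
  finally show ?thesis .
qed

lemma prod_two:
  assumes "finite A" "j \<in> A" "k \<in> A" "j \<noteq> k"
  shows "(\<Prod>x\<in>A. (if x = j then a x else if x = k then b x else (1::real))) = a j * b k"
proof -
  have "(\<Prod>x\<in>A. (if x = j then a x else if x = k then b x else (1::real)))
     = a j * (\<Prod>x\<in>A-{j}. (if x = j then a x else if x = k then b x else (1::real)))"
    using assms by (subst prod.remove[of A j]) auto
  also have "(\<Prod>x\<in>A-{j}. (if x = j then a x else if x = k then b x else (1::real)))
     = b k * (\<Prod>x\<in>A-{j}-{k}. (if x = j then a x else if x = k then b x else (1::real)))"
    using assms by (subst prod.remove[of "A-{j}" k]) auto
  also have "(\<Prod>x\<in>A-{j}-{k}. (if x = j then a x else if x = k then b x else (1::real))) = 1"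
    by (intro prod.neutral) auto
  finally show ?thesis by simp
qed

lemma exp_pair:
  assumes "finite E" "E \<noteq> {}" "j < s" "k < s" "j \<noteq> k" "\<And>x. 0 \<le> g x"
  shows "measure_pmf.expectation (draws_pmf E s) (\<lambda>h. (g :: _ \<Rightarrow> real) (h j) * g (h k))
     = (sum g E / real (card E)) * (sum g E / real (card E))"
proof -
  define f where "f x = (if x = j then g else if x = k then g else (\<lambda>_. 1::real))" for x :: nat
  have "measure_pmf.expectation (draws_pmf E s) (\<lambda>h. g (h j) * g (h k))
      = measure_pmf.expectation (draws_pmf E s) (\<lambda>h. \<Prod>x\<in>{..<s}. f x (h x))"
  proof -
    have "(\<lambda>h. \<Prod>x\<in>{..<s}. f x (h x)) = (\<lambda>h. g (h j) * g (h k))"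
    proof
      fix h :: "nat \<Rightarrow> 'a"
      have "(\<Prod>x\<in>{..<s}. f x (h x)) = (\<Prod>x\<in>{..<s}. (if x = j then g (h x) else if x = k then g (h x) else (1::real)))"
        unfolding f_def by (intro prod.cong refl) auto
      also have "\<dots> = g (h j) * g (h k)"
        using prod_two[of "{..<s}" j k "\<lambda>x. g (h x)" "\<lambda>x. g (h x)"] assms by auto
      finally show "(\<Prod>x\<in>{..<s}. f x (h x)) = g (h j) * g (h k)" .
    qed
    then show ?thesis by simp
  qed
  also have "\<dots> = (\<Prod>x\<in>{..<s}. measure_pmf.expectation (pmf_of_set E) (f x))"
    unfolding draws_pmf_def
    by (rule expectation_prod_Pi_pmf)
       (auto simp: f_def assms(6) integrable_measure_pmf_finite assms(1,2))
  also have "\<dots> = (\<Prod>x\<in>{..<s}. (if x = j then measure_pmf.expectation (pmf_of_set E) g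
        else if x = k then measure_pmf.expectation (pmf_of_set E) g else (1::real)))"
    unfolding f_def by (intro prod.cong refl) auto
  also have "\<dots> = measure_pmf.expectation (pmf_of_set E) g * measure_pmf.expectation (pmf_of_set E) g"
    using prod_two[of "{..<s}" j k] assms by auto
  finally show ?thesis using assms by (simp add: integral_pmf_of_set)
qed


theorem theorem4p2:
  fixes E :: "'e set" and eu :: "'e \<Rightarrow> 'u" and el :: "'e \<Rightarrow> 'l" and et :: "'e \<Rightarrow> real"
    and tau c :: real and s i :: nat
  assumes "finite E" and "E \<noteq> {}"
    and "\<forall>e\<in>E. et e > 0"
    and "tau > 0" and "c > 0" and "s > 0"
    and "i \<in> {1..6}"
  shows "measure_pmf.expectation (draws_pmf E s) (TBC_I_estimate E eu el et tau c s i)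
           = real (count_C E eu el et tau i) \<and>
         measure_pmf.variance (draws_pmf E s) (TBC_I_estimate E eu el et tau c s i)
           \<le> (real (card E) - 1) / real s * (real (count_C E eu el et tau i))^2"
proof -
  define Y where "Y d = (\<Sum>e\<in>{e \<in> E. et d \<le> et e \<and> et e \<le> et d + c * tau}.
        real (card E) / (real s * real (m_prime E et c tau e)) * real (count_C_edge E eu el et tau i e))" for d
  define m where "m = real (card E)"
  define C where "C = real (count_C E eu el et tau i)"
  define P where "P = draws_pmf E s"
  define \<mu> where "\<mu> = sum Y E / m"
  define A2 where "A2 = sum (\<lambda>d. (Y d)^2) E / m"
  have mpos: "m > 0" unfolding m_def using assms(1,2) by (simp add: card_gt_0_iff)
  have Ynn: "0 \<le> Y d" for d unfolding Y_def by (intro sum_nonneg) simp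
  have sY: "sum Y E = m / real s * C"
    unfolding Y_def m_def C_def using sum_Y[OF assms(1,7,5,4)] by simp
  have mu: "\<mu> = C / real s" unfolding \<mu>_def sY using mpos by simp
  have X: "TBC_I_estimate E eu el et tau c s i = (\<lambda>h. \<Sum>j<s. Y (h j))"
    by (simp add: fun_eq_iff TBC_I_estimate_def Y_def)
  have int: "integrable (measure_pmf P) (f :: _ \<Rightarrow> real)" for f
    unfolding P_def by (rule int_draws[OF assms(1,2)])
  have EX: "measure_pmf.expectation P (\<lambda>h. \<Sum>j<s. Y (h j)) = real s * \<mu>"
  proof -
    have "measure_pmf.expectation P (\<lambda>h. \<Sum>j<s. Y (h j)) = (\<Sum>j<s. measure_pmf.expectation P (\<lambda>h. Y (h j)))"
      by (rule Bochner_Integration.integral_sum) (rule int)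
    also have "\<dots> = (\<Sum>j<s. \<mu>)"
      unfolding P_def \<mu>_def m_def by (intro sum.cong refl) (simp add: exp_comp[OF assms(1,2)])
    finally show ?thesis by simp
  qed
  have EX2: "measure_pmf.expectation P (\<lambda>h. (\<Sum>j<s. Y (h j))^2) = real s * (A2 + (real s - 1) * \<mu>^2)"
  proof -
    have "measure_pmf.expectation P (\<lambda>h. (\<Sum>j<s. Y (h j))^2)
        = measure_pmf.expectation P (\<lambda>h. \<Sum>j<s. \<Sum>k<s. Y (h j) * Y (h k))"
      by (simp add: power2_eq_square sum_product)
    also have "\<dots> = (\<Sum>j<s. measure_pmf.expectation P (\<lambda>h. \<Sum>k<s. Y (h j) * Y (h k)))"
      by (rule Bochner_Integration.integral_sum) (rule int)
    also have "\<dots> = (\<Sum>j<s. A2 + (real s - 1) * \<mu>^2)"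
    proof (intro sum.cong refl)
      fix j assume j: "j \<in> {..<s}"
      have "measure_pmf.expectation P (\<lambda>h. \<Sum>k<s. Y (h j) * Y (h k))
         = (\<Sum>k<s. measure_pmf.expectation P (\<lambda>h. Y (h j) * Y (h k)))"
        by (rule Bochner_Integration.integral_sum) (rule int)
      also have "\<dots> = measure_pmf.expectation P (\<lambda>h. Y (h j) * Y (h j))
          + (\<Sum>k\<in>{..<s}-{j}. measure_pmf.expectation P (\<lambda>h. Y (h j) * Y (h k)))"
        using j by (subst sum.remove[of _ j]) auto
      also have "measure_pmf.expectation P (\<lambda>h. Y (h j) * Y (h j)) = A2"
        unfolding P_def A2_def m_def using exp_comp[OF assms(1,2), of j s "\<lambda>d. (Y d)^2"] j
        by (simp add: power2_eq_square)
      also have "(\<Sum>k\<in>{..<s}-{j}. measure_pmf.expectation P (\<lambda>h. Y (h j) * Y (h k)))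
          = (\<Sum>k\<in>{..<s}-{j}. \<mu>^2)"
        unfolding P_def \<mu>_def m_def using j
        by (intro sum.cong refl) (auto simp: exp_pair[OF assms(1,2)] Ynn power2_eq_square)
      also have "\<dots> = (real s - 1) * \<mu>^2" using j by (simp add: of_nat_diff)
      finally show "measure_pmf.expectation P (\<lambda>h. \<Sum>k<s. Y (h j) * Y (h k)) = A2 + (real s - 1) * \<mu>^2" .
    qed
    finally show ?thesis by simp
  qed
  have Var: "measure_pmf.variance P (\<lambda>h. \<Sum>j<s. Y (h j)) = real s * (A2 - \<mu>^2)"
  proof -
    have "measure_pmf.variance P (\<lambda>h. \<Sum>j<s. Y (h j))
       = measure_pmf.expectation P (\<lambda>h. (\<Sum>j<s. Y (h j))^2) - (measure_pmf.expectation P (\<lambda>h. \<Sum>j<s. Y (h j)))^2"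
      by (rule measure_pmf.variance_eq) (rule int)+
    also have "\<dots> = real s * (A2 - \<mu>^2)" unfolding EX EX2 by (simp add: algebra_simps power2_eq_square)
    finally show ?thesis .
  qed
  have A2le: "A2 \<le> (sum Y E)^2 / m"
    unfolding A2_def using sumsq_le_sq_sum[OF assms(1) Ynn] mpos by (simp add: divide_right_mono)
  have "real s * (A2 - \<mu>^2) \<le> real s * ((sum Y E)^2 / m - \<mu>^2)"
    using A2le assms(6) by simp
  also have "\<dots> = (m - 1) / real s * C^2"
    unfolding sY mu using mpos assms(6) by (simp add: field_simps power2_eq_square)
  finally have "real s * (A2 - \<mu>^2) \<le> (m - 1) / real s * C^2" .
  moreover have "real s * \<mu> = C" unfolding mu using assms(6) by simp
  ultimately show ?thesis
    unfolding X using EX Var by (simp add: P_def m_def C_def)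
qed

end
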